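(* Let $q:\mathbb{R}\to\mathbb{R}$ be infinitely differentiable and strictly positive, let $p(t)=\frac1{q(t)}\left(\frac54\left(\frac{q'(t)}{q(t)}\right)^2-\frac{q''(t)}{q(t)}\right)$, and suppose there are real numbers $\eta_1>0$, $\eta_2>0$ with $\eta_1\le q(t)\le\eta_2$, $|p(t)|\le\eta_2$ and $|q'(t)|\le\eta_2$ for all $0\le t\le1$. Let $k=20\left(\frac{\eta_2}{\eta_1}\right)^2+8\eta_2^2+10\frac{\eta_2}{\eta_1}+1$, and let $\epsilon$ be a real number with $0<\epsilon<\eta_1/2$. Suppose $p_b:[0,1]\to\mathbb{R}$ is infinitely differentiable with $\sup_{0\le t\le1}|p(t)-p_b(t)|\le\epsilon e^{-k}$. Then there exists an infinitely differentiable $q_b:[0,1]\to\mathbb{R}$ such that $$\frac1{q_b(t)}\left(\frac54\left(\frac{q_b'(t)}{q_b(t)}\right)^2-\frac{q_b''(t)}{q_b(t)}\right)=p_b(t)\quad\text{for all }0\le t\le1$$ and $\sup_{0\le t\le1}|q(t)-q_b(t)|\le\epsilon$. *)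

theory Defs
  imports "HOL-Analysis.Analysis"
begin

definition deriv_seq :: "real set \<Rightarrow> (real \<Rightarrow> real) \<Rightarrow> (nat \<Rightarrow> real \<Rightarrow> real) \<Rightarrow> bool" where
  "deriv_seq S f D \<longleftrightarrow> D 0 = f \<and>
     (\<forall>n. \<forall>x\<in>S. (D n has_real_derivative D (Suc n) x) (at x within S))"

definition smooth_on :: "real set \<Rightarrow> (real \<Rightarrow> real) \<Rightarrow> bool" where
  "smooth_on S f \<longleftrightarrow> (\<exists>D. deriv_seq S f D)"

end

theory Submission
  imports Defs
begin


fun Cn :: "real set \<Rightarrow> nat \<Rightarrow> (real \<Rightarrow> real) \<Rightarrow> bool" where
  "Cn S 0 f = True"
| "Cn S (Suc n) f = (\<exists>f'. (\<forall>x\<in>S. (f has_real_derivative f' x) (at x within S)) \<and> Cn S n f')"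

lemma Cn_Suc_imp: "Cn S (Suc n) f \<Longrightarrow> Cn S n f"
proof (induction n arbitrary: f)
  case 0 then show ?case by simp
next
  case (Suc n)
  then obtain f' where "\<forall>x\<in>S. (f has_real_derivative f' x) (at x within S)" "Cn S (Suc n) f'"
    by auto
  then show ?case using Suc.IH by auto
qed

lemma Cn_const: "Cn S n (\<lambda>x. a)"
proof (induction n arbitrary: a)
  case 0 then show ?case by simp
next
  case (Suc n)
  show ?case by (auto intro!: exI[of _ "\<lambda>x. 0"] Suc derivative_eq_intros)
qed

lemma Cn_add: "Cn S n f \<Longrightarrow> Cn S n g \<Longrightarrow> Cn S n (\<lambda>x. f x + g x)"
proof (induction n arbitrary: f g)
  case 0 then show ?case by simp
next
  case (Suc n)
  then obtain f' g' where f: "\<forall>x\<in>S. (f has_real_derivative f' x) (at x within S)" "Cn S n f'"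
    and g: "\<forall>x\<in>S. (g has_real_derivative g' x) (at x within S)" "Cn S n g'"
    by auto
  have "\<forall>x\<in>S. ((\<lambda>x. f x + g x) has_real_derivative f' x + g' x) (at x within S)"
    using f(1) g(1) by (auto intro!: DERIV_add)
  then show ?case
    by (auto intro!: exI[of _ "\<lambda>x. f' x + g' x"] Suc.IH f g)
qed

lemma Cn_mult: "Cn S n f \<Longrightarrow> Cn S n g \<Longrightarrow> Cn S n (\<lambda>x. f x * g x)"
proof (induction n arbitrary: f g)
  case 0 then show ?case by simp
next
  case (Suc n)
  then obtain f' g' where f: "\<forall>x\<in>S. (f has_real_derivative f' x) (at x within S)" "Cn S n f'"
    and g: "\<forall>x\<in>S. (g has_real_derivative g' x) (at x within S)" "Cn S n g'"
    by auto
  have fn: "Cn S n f" and gn: "Cn S n g" using Suc.prems Cn_Suc_imp by blast+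
  have "\<forall>x\<in>S. ((\<lambda>x. f x * g x) has_real_derivative f' x * g x + f x * g' x) (at x within S)"
    using f(1) g(1) by (auto intro!: DERIV_cong[OF DERIV_mult'])
  then show ?case
    by (auto intro!: exI[of _ "\<lambda>x. f' x * g x + f x * g' x"] Cn_add Suc.IH f g fn gn)
qed

lemma Cn_inverse: "Cn S n f \<Longrightarrow> (\<forall>x\<in>S. f x \<noteq> 0) \<Longrightarrow> Cn S n (\<lambda>x. inverse (f x))"
proof (induction n arbitrary: f)
  case 0 then show ?case by simp
next
  case (Suc n)
  then obtain f' where f: "\<forall>x\<in>S. (f has_real_derivative f' x) (at x within S)" "Cn S n f'"
    by auto
  have fn: "Cn S n f" using Suc.prems Cn_Suc_imp by blast
  have ih: "Cn S n (\<lambda>x. inverse (f x))" using Suc.IH[OF fn] Suc.prems by blast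
  have d: "\<forall>x\<in>S. ((\<lambda>x. inverse (f x)) has_real_derivative
      (- 1) * f' x * (inverse (f x) * inverse (f x))) (at x within S)"
    using f Suc.prems by (auto intro!: derivative_eq_intros simp: field_simps power2_eq_square)
  show ?case
    using d by (auto intro!: exI[of _ "\<lambda>x. (- 1) * f' x * (inverse (f x) * inverse (f x))"]
        Cn_mult Cn_const f ih)
qed

lemma Cn_cong: "Cn S n f \<Longrightarrow> (\<forall>x\<in>S. f x = g x) \<Longrightarrow> Cn S n g"
proof (cases n)
  case 0 then show ?thesis by simp
next
  case (Suc m)
  assume "Cn S n f" "\<forall>x\<in>S. f x = g x"
  then obtain f' where f: "\<forall>x\<in>S. (f has_real_derivative f' x) (at x within S)" "Cn S m f'"
    using Suc by auto
  have "\<forall>x\<in>S. (g has_real_derivative f' x) (at x within S)"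
    using f(1) \<open>\<forall>x\<in>S. f x = g x\<close>
    by (auto intro: has_field_derivative_transform_within[where d=1])
  then show ?thesis using Suc f(2) by auto
qed

lemma deriv_seq_Cn: "deriv_seq S f D \<Longrightarrow> Cn S n (D m)"
proof (induction n arbitrary: m)
  case 0 then show ?case by simp
next
  case (Suc n)
  then show ?case unfolding deriv_seq_def by (auto intro!: exI[of _ "D (Suc m)"])
qed

lemma deriv_unique01:
  assumes "x \<in> {0..1::real}" "(f has_real_derivative a) (at x within {0..1})"
    "(f has_real_derivative b) (at x within {0..1})"
  shows "a = b"
  using vector_derivative_unique_within_closed_interval[of 0 1 x f a b] assms
  by (auto simp: has_real_derivative_iff_has_vector_derivative cbox_interval)

lemma Cn_build:
  assumes "\<forall>n. Cn {0..1} n f"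
  shows "\<exists>D. deriv_seq {0..1} f D"
proof -
  define D where "D = rec_nat f (\<lambda>n g x. SOME d. (g has_real_derivative d) (at x within {0..1}))"
  have D0: "D 0 = f" and DS: "\<And>n. D (Suc n) = (\<lambda>x. SOME d. (D n has_real_derivative d) (at x within {0..1}))"
    by (simp_all add: D_def)
  have main: "\<forall>m. Cn {0..1} m (D n)" for n
  proof (induction n)
    case 0 then show ?case using assms D0 by simp
  next
    case (Suc n)
    show ?case
    proof
      fix m
      obtain f' where f': "\<forall>x\<in>{0..1}. (D n has_real_derivative f' x) (at x within {0..1})"
        "Cn {0..1} m f'" using Suc[rule_format, of "Suc m"] by auto
      have "\<forall>x\<in>{0..1}. f' x = D (Suc n) x"
      proof
        fix x :: real assume x: "x \<in> {0..1}"
        have "(D n has_real_derivative D (Suc n) x) (at x within {0..1})"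
          unfolding DS using f'(1) x by (auto intro: someI)
        then show "f' x = D (Suc n) x" using deriv_unique01 x f'(1) by blast
      qed
      then show "Cn {0..1} m (D (Suc n))" using Cn_cong f'(2) by blast
    qed
  qed
  have "\<forall>n. \<forall>x\<in>{0..1}. (D n has_real_derivative D (Suc n) x) (at x within {0..1})"
  proof (intro allI ballI)
    fix n and x :: real assume x: "x \<in> {0..1}"
    obtain f' where f': "\<forall>x\<in>{0..1}. (D n has_real_derivative f' x) (at x within {0..1})"
      using main[of n] by (metis Cn.simps(2))
    then show "(D n has_real_derivative D (Suc n) x) (at x within {0..1})"
      unfolding DS using x by (auto intro: someI)
  qed
  then show ?thesis using D0 unfolding deriv_seq_def by blast
qed




definition clamp :: "real \<Rightarrow> real" where "clamp t = max 0 (min 1 t)"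

lemma clamp_in: "clamp t \<in> {0..1}" by (auto simp: clamp_def)
lemma clamp_id: "t \<in> {0..1} \<Longrightarrow> clamp t = t" by (auto simp: clamp_def)
lemma continuous_clamp: "continuous_on S clamp"
  unfolding clamp_def by (intro continuous_intros)

lemma prod_ge: "(c::real) > 0 \<Longrightarrow> c \<le> u \<Longrightarrow> c \<le> v \<Longrightarrow> c^(i+j) \<le> u^i * v^j"
  by (simp add: power_add mult_mono power_mono)

lemma inv_cube_lip:
  fixes u v c :: real
  assumes c: "c > 0" "u \<ge> c" "v \<ge> c"
  shows "\<bar>1 / u^3 - 1 / v^3\<bar> \<le> 3 / c^4 * \<bar>u - v\<bar>"
proof -
  have u0: "u > 0" and v0: "v > 0" using assms by auto
  have eq: "1 / u^3 - 1 / v^3 = (v - u) * (1/(u^1 * v^3) + 1/(u^2 * v^2) + 1/(u^3 * v^1))"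
    using u0 v0 by (simp add: field_simps power2_eq_square power3_eq_cube)
  have "c^(1+3) \<le> u^1 * v^3" "c^(2+2) \<le> u^2 * v^2" "c^(3+1) \<le> u^3 * v^1"
    using prod_ge[OF c] by blast+
  then have b: "1/(u^1 * v^3) \<le> 1/c^4" "1/(u^2 * v^2) \<le> 1/c^4" "1/(u^3 * v^1) \<le> 1/c^4"
    using c by (auto intro!: divide_left_mono mult_pos_pos)
  have pos: "0 \<le> 1/(u^1 * v^3) + 1/(u^2 * v^2) + 1/(u^3 * v^1)" using u0 v0 by simp
  have "\<bar>1 / u^3 - 1 / v^3\<bar> = \<bar>u - v\<bar> * (1/(u^1 * v^3) + 1/(u^2 * v^2) + 1/(u^3 * v^1))"
    unfolding eq abs_mult using pos by (simp add: abs_minus_commute)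
  also have "\<dots> \<le> \<bar>u - v\<bar> * (3 / c^4)" using b by (intro mult_left_mono) auto
  finally show ?thesis by (simp add: mult.commute)
qed

lemma inv_quart_lip:
  fixes u v c :: real
  assumes c: "c > 0" "u \<ge> c" "v \<ge> c"
  shows "\<bar>1 / u^4 - 1 / v^4\<bar> \<le> 4 / c^5 * \<bar>u - v\<bar>"
proof -
  have u0: "u > 0" and v0: "v > 0" using assms by auto
  have eq: "1 / u^4 - 1 / v^4 = (v - u) * (1/(u^1 * v^4) + 1/(u^2 * v^3) + 1/(u^3 * v^2) + 1/(u^4 * v^1))"
    using u0 v0 by (simp add: field_simps power2_eq_square power3_eq_cube power4_eq_xxxx)
  have "c^(1+4) \<le> u^1 * v^4" "c^(2+3) \<le> u^2 * v^3" "c^(3+2) \<le> u^3 * v^2" "c^(4+1) \<le> u^4 * v^1"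
    using prod_ge[OF c] by blast+
  then have b: "1/(u^1 * v^4) \<le> 1/c^5" "1/(u^2 * v^3) \<le> 1/c^5" "1/(u^3 * v^2) \<le> 1/c^5" "1/(u^4 * v^1) \<le> 1/c^5"
    using c by (auto intro!: divide_left_mono mult_pos_pos)
  have pos: "0 \<le> 1/(u^1 * v^4) + 1/(u^2 * v^3) + 1/(u^3 * v^2) + 1/(u^4 * v^1)" using u0 v0 by simp
  have "\<bar>1 / u^4 - 1 / v^4\<bar> = \<bar>u - v\<bar> * (1/(u^1 * v^4) + 1/(u^2 * v^3) + 1/(u^3 * v^2) + 1/(u^4 * v^1))"
    unfolding eq abs_mult using pos by (simp add: abs_minus_commute)
  also have "\<dots> \<le> \<bar>u - v\<bar> * (4 / c^5)" using b by (intro mult_left_mono) auto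
  finally show ?thesis by (simp add: mult.commute)
qed

lemma exp_int_bound:
  fixes g :: "real \<Rightarrow> real" and lam M s :: real
  assumes lam: "lam > 0" and s: "s \<in> {0..1}" and g: "continuous_on {0..1} g"
    and b: "\<And>r. r \<in> {0..1} \<Longrightarrow> \<bar>g r\<bar> \<le> M * exp (lam * r)"
  shows "\<bar>integral {0..s} g\<bar> \<le> M * exp (lam * s) / lam"
proof -
  have sub: "{0..s} \<subseteq> {0..1}" using s by auto
  have gi: "g integrable_on {0..s}"
    using integrable_continuous_real continuous_on_subset[OF g sub] by auto
  have fi: "((\<lambda>r. M * exp (lam * r)) has_integral (M * exp (lam * s) / lam - M * exp (lam * 0) / lam)) {0..s}"
    using s lam
    by (intro fundamental_theorem_of_calculus[where f="\<lambda>r. M * exp (lam * r) / lam"])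
       (auto simp: has_real_derivative_iff_has_vector_derivative[symmetric]
             intro!: derivative_eq_intros)
  have "\<bar>integral {0..s} g\<bar> \<le> integral {0..s} (\<lambda>r. M * exp (lam * r))"
    using integral_norm_bound_integral[OF gi has_integral_integrable[OF fi]] b sub
    by auto
  also have "\<dots> = M * exp (lam * s) / lam - M / lam" using integral_unique[OF fi] by simp
  also have "\<dots> \<le> M * exp (lam * s) / lam"
  proof -
    have "0 \<le> M" using b[of 0] by auto
    then show ?thesis using lam by simp
  qed
  finally show ?thesis .
qed




lemma clamp_bcont:
  assumes h: "continuous_on {0..1} h"
  shows "(\<lambda>t. h (clamp t)) \<in> bcontfun"
proof -
  have "range clamp \<subseteq> {0..1}" using clamp_in by auto
  then have "continuous_on UNIV (\<lambda>t. h (clamp t))"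
    using continuous_on_compose2[OF h continuous_clamp[of UNIV]] by blast
  moreover have "bounded (range (\<lambda>t. h (clamp t)))"
  proof -
    have "range (\<lambda>t. h (clamp t)) \<subseteq> h ` {0..1}" using clamp_in by auto
    moreover have "bounded (h ` {0..1})"
      using compact_continuous_image[OF h] compact_imp_bounded by auto
    ultimately show ?thesis using bounded_subset by blast
  qed
  ultimately show ?thesis unfolding bcontfun_def by auto
qed

lemma cont_from_deriv:
  "(\<forall>t\<in>S. (f has_real_derivative f' t) (at t within S)) \<Longrightarrow> continuous_on S f"
  using DERIV_continuous continuous_on_eq_continuous_within by blast

locale odeloc =
  fixes pb :: "real \<Rightarrow> real" and c P lam y0 y1 :: real
  assumes pb_cont: "continuous_on {0..1} pb" and Pb: "\<And>r. r \<in> {0..1} \<Longrightarrow> \<bar>pb r\<bar> \<le> P"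
    and c_pos: "c > 0" and lam_pos: "lam > 0" and lamL: "2 * (3 * P / (4 * c^4)) \<le> lam^2"
begin

definition G where "G r u = pb r / (4 * (max u c)^3)"
definition V where "V z s = y1 + integral {0..s} (\<lambda>r. G r (z r))"
definition T where "T z t = y0 + integral {0..t} (V z)"

lemma G_cont: "continuous_on {0..1} z \<Longrightarrow> continuous_on {0..1} (\<lambda>r. G r (z r))"
proof -
  assume z: "continuous_on {0..1} z"
  have "continuous_on {0..1} (\<lambda>r. 4 * (max (z r) c)^3)"
    by (intro continuous_on_mult continuous_on_const continuous_on_power continuous_on_max z)
  moreover have "\<forall>r\<in>{0..1}. 4 * (max (z r) c)^3 \<noteq> 0"
  proof
    fix r show "4 * (max (z r) c)^3 \<noteq> 0" using c_pos by (simp add: max_def)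
  qed
  ultimately show ?thesis unfolding G_def by (intro continuous_on_divide pb_cont) auto
qed

lemma V_deriv: "continuous_on {0..1} z \<Longrightarrow> t \<in> {0..1} \<Longrightarrow>
   (V z has_real_derivative G t (z t)) (at t within {0..1})"
  unfolding V_def
  by (rule DERIV_cong[OF DERIV_add[OF DERIV_const integral_has_real_derivative[OF G_cont]]]) auto

lemma V_cont: assumes z: "continuous_on {0..1} z" shows "continuous_on {0..1} (V z)"
  by (rule cont_from_deriv[where f'="\<lambda>t. G t (z t)"]) (auto intro: V_deriv[OF z])

lemma T_deriv: "continuous_on {0..1} z \<Longrightarrow> t \<in> {0..1} \<Longrightarrow>
   (T z has_real_derivative V z t) (at t within {0..1})"
  unfolding T_def
  by (rule DERIV_cong[OF DERIV_add[OF DERIV_const integral_has_real_derivative[OF V_cont]]]) auto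

lemma T_cont: assumes z: "continuous_on {0..1} z" shows "continuous_on {0..1} (T z)"
  by (rule cont_from_deriv[where f'="V z"]) (auto intro: T_deriv[OF z])

definition L where "L = 3 * P / (4 * c^4)"

lemma P_nonneg: "P \<ge> 0" using Pb[of 0] by auto

lemma G_lip: "r \<in> {0..1} \<Longrightarrow> \<bar>G r u - G r v\<bar> \<le> L * \<bar>u - v\<bar>"
proof -
  assume r: "r \<in> {0..1}"
  have eq: "G r u - G r v = pb r / 4 * (1 / (max u c)^3 - 1 / (max v c)^3)"
    unfolding G_def by (simp add: field_simps)
  have "\<bar>G r u - G r v\<bar> = \<bar>pb r\<bar> / 4 * \<bar>1 / (max u c)^3 - 1 / (max v c)^3\<bar>"
    unfolding eq by (simp add: abs_mult)
  also have "\<dots> \<le> P / 4 * (3 / c^4 * \<bar>max u c - max v c\<bar>)"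
  proof -
    have X: "\<bar>1 / (max u c)^3 - 1 / (max v c)^3\<bar> \<le> 3 / c^4 * \<bar>max u c - max v c\<bar>"
      using inv_cube_lip[OF c_pos, of "max u c" "max v c"] by simp
    have Y: "\<bar>pb r\<bar> / 4 \<le> P / 4" using Pb[OF r] by simp
    show ?thesis using mult_mono[OF Y X] P_nonneg by simp
  qed
  also have "\<dots> \<le> P / 4 * (3 / c^4 * \<bar>u - v\<bar>)"
  proof -
    have "\<bar>max u c - max v c\<bar> \<le> \<bar>u - v\<bar>" by (simp add: max_def abs_if)
    then show ?thesis using P_nonneg c_pos by (intro mult_left_mono) auto
  qed
  finally show ?thesis by (simp add: L_def field_simps)
qed

lemma L_lam: "L / lam^2 \<le> 1/2"
proof -
  have "2 * L \<le> lam^2" using lamL unfolding L_def .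
  then show ?thesis using lam_pos by (simp add: pos_divide_le_eq)
qed

lemma T_diff_bound:
  assumes z1: "continuous_on {0..1} z1" and z2: "continuous_on {0..1} z2"
    and b: "\<And>r. r \<in> {0..1} \<Longrightarrow> \<bar>z1 r - z2 r\<bar> \<le> d * exp (lam * r)"
    and t: "t \<in> {0..1}"
  shows "\<bar>T z1 t - T z2 t\<bar> \<le> d / 2 * exp (lam * t)"
proof -
  have d0: "d \<ge> 0"
  proof -
    have "\<bar>z1 0 - z2 0\<bar> \<le> d * exp (lam * 0)" using b[of 0] by simp
    then show ?thesis by simp
  qed
  have Gb: "\<bar>G r (z1 r) - G r (z2 r)\<bar> \<le> (L * d) * exp (lam * r)" if "r \<in> {0..1}" for r
  proof -
    have "L \<ge> 0" unfolding L_def using P_nonneg c_pos by simp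
    then have "L * \<bar>z1 r - z2 r\<bar> \<le> L * (d * exp (lam * r))"
      using b[OF that] by (rule mult_left_mono[rotated])
    then show ?thesis using G_lip[OF that, of "z1 r" "z2 r"] by (simp add: mult.assoc)
  qed
  have Vd: "V z1 s - V z2 s = integral {0..s} (\<lambda>r. G r (z1 r) - G r (z2 r))" if "s \<in> {0..1}" for s
  proof -
    have sub: "{0..s} \<subseteq> {0..1}" using that by auto
    have "(\<lambda>r. G r (z1 r)) integrable_on {0..s}" "(\<lambda>r. G r (z2 r)) integrable_on {0..s}"
      by (rule integrable_continuous_real[OF continuous_on_subset[OF G_cont[OF z1] sub]],
          rule integrable_continuous_real[OF continuous_on_subset[OF G_cont[OF z2] sub]])
    then have "integral {0..s} (\<lambda>r. G r (z1 r) - G r (z2 r)) = integral {0..s} (\<lambda>r. G r (z1 r)) - integral {0..s} (\<lambda>r. G r (z2 r))"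
      by (rule integral_diff)
    then show ?thesis unfolding V_def by linarith
  qed
  have Vb: "\<bar>V z1 s - V z2 s\<bar> \<le> (L * d / lam) * exp (lam * s)" if "s \<in> {0..1}" for s
  proof -
    have "\<bar>integral {0..s} (\<lambda>r. G r (z1 r) - G r (z2 r))\<bar> \<le> (L * d) * exp (lam * s) / lam"
      by (rule exp_int_bound[OF lam_pos that continuous_on_diff[OF G_cont[OF z1] G_cont[OF z2]] Gb])
    then show ?thesis unfolding Vd[OF that] times_divide_eq_left .
  qed
  have Td: "T z1 t - T z2 t = integral {0..t} (\<lambda>s. V z1 s - V z2 s)"
  proof -
    have sub: "{0..t} \<subseteq> {0..1}" using t by auto
    have "V z1 integrable_on {0..t}" "V z2 integrable_on {0..t}"
      by (rule integrable_continuous_real[OF continuous_on_subset[OF V_cont[OF z1] sub]],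
          rule integrable_continuous_real[OF continuous_on_subset[OF V_cont[OF z2] sub]])
    then have "integral {0..t} (\<lambda>s. V z1 s - V z2 s) = integral {0..t} (V z1) - integral {0..t} (V z2)"
      by (rule integral_diff)
    then show ?thesis unfolding T_def by linarith
  qed
  have "\<bar>T z1 t - T z2 t\<bar> \<le> (L * d / lam) * exp (lam * t) / lam"
    unfolding Td
    by (rule exp_int_bound[OF lam_pos t continuous_on_diff[OF V_cont[OF z1] V_cont[OF z2]] Vb])
  also have "\<dots> = (L / lam^2) * d * exp (lam * t)" by (simp add: power2_eq_square)
  also have "\<dots> \<le> 1/2 * d * exp (lam * t)"
    using L_lam d0 by (intro mult_right_mono) auto
  finally show ?thesis by simp
qed

end




context odeloc
begin

definition Tf where
  "Tf w t = exp (- lam * clamp t) * T (\<lambda>s. exp (lam * clamp s) * w s) (clamp t)"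

definition Tw :: "(real \<Rightarrow>\<^sub>C real) \<Rightarrow> (real \<Rightarrow>\<^sub>C real)" where
  "Tw w = Bcontfun (Tf (apply_bcontfun w))"

lemma zw_cont: "continuous_on {0..1} (\<lambda>s. exp (lam * clamp s) * apply_bcontfun w s)"
  by (intro continuous_on_mult continuous_on_exp continuous_on_mult continuous_on_const
      continuous_clamp continuous_on_apply_bcontfun)

lemma Tf_bcont: "Tf (apply_bcontfun w) \<in> bcontfun"
proof -
  let ?z = "\<lambda>s. exp (lam * clamp s) * apply_bcontfun w s"
  have h: "continuous_on {0..1} (\<lambda>t. exp (- lam * t) * T ?z t)"
    by (intro continuous_on_mult continuous_on_exp continuous_on_const continuous_on_id
        T_cont zw_cont)
  show ?thesis unfolding Tf_def[abs_def] using clamp_bcont[OF h] by simp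
qed

lemma Tw_apply: "apply_bcontfun (Tw w) t = Tf (apply_bcontfun w) t"
  unfolding Tw_def using Bcontfun_inverse[OF Tf_bcont] by simp

lemma Tw_contr: "dist (Tw w1) (Tw w2) \<le> 1/2 * dist w1 w2"
proof (rule dist_bound)
  fix t
  let ?d = "dist w1 w2"
  let ?z1 = "\<lambda>s. exp (lam * clamp s) * apply_bcontfun w1 s"
  let ?z2 = "\<lambda>s. exp (lam * clamp s) * apply_bcontfun w2 s"
  have b: "\<bar>?z1 r - ?z2 r\<bar> \<le> ?d * exp (lam * r)" if "r \<in> {0..1}" for r
  proof -
    have "\<bar>?z1 r - ?z2 r\<bar> = exp (lam * r) * \<bar>apply_bcontfun w1 r - apply_bcontfun w2 r\<bar>"
      using clamp_id[OF that] by (simp add: abs_mult right_diff_distrib[symmetric])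
    also have "\<dots> \<le> exp (lam * r) * ?d"
      using dist_bounded[of w1 r w2] by (intro mult_left_mono) (auto simp: dist_real_def)
    finally show ?thesis by (simp add: mult.commute)
  qed
  have "\<bar>T ?z1 (clamp t) - T ?z2 (clamp t)\<bar> \<le> ?d / 2 * exp (lam * clamp t)"
    by (rule T_diff_bound[OF zw_cont zw_cont b clamp_in])
  then have "exp (- lam * clamp t) * \<bar>T ?z1 (clamp t) - T ?z2 (clamp t)\<bar>
     \<le> exp (- lam * clamp t) * (?d / 2 * exp (lam * clamp t))"
    by (intro mult_left_mono) auto
  also have "\<dots> = ?d / 2" by (simp add: exp_minus field_simps)
  finally have "\<bar>Tf (apply_bcontfun w1) t - Tf (apply_bcontfun w2) t\<bar> \<le> ?d / 2"
    unfolding Tf_def by (simp add: abs_mult right_diff_distrib[symmetric])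
  then show "dist (apply_bcontfun (Tw w1) t) (apply_bcontfun (Tw w2) t) \<le> 1/2 * ?d"
    by (simp add: Tw_apply dist_real_def)
qed

lemma T_cong:
  assumes "\<And>s. s \<in> {0..1} \<Longrightarrow> z1 s = z2 s" and t: "t \<in> {0..1}"
  shows "T z1 t = T z2 t"
proof -
  have "V z1 s = V z2 s" if "s \<in> {0..1}" for s
    unfolding V_def using that assms(1) by (intro arg_cong2[where f="(+)"] refl integral_cong) auto
  then show ?thesis unfolding T_def using t by (intro arg_cong2[where f="(+)"] refl integral_cong) auto
qed

lemma T_close:
  assumes yd: "\<And>t. t \<in> {0..1} \<Longrightarrow> (y has_real_derivative y' t) (at t within {0..1})"
    and y'd: "\<And>t. t \<in> {0..1} \<Longrightarrow> (y' has_real_derivative y'' t) (at t within {0..1})"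
    and y''c: "continuous_on {0..1} y''"
    and iy0: "y 0 = y0" and iy1: "y' 0 = y1"
    and Kb: "\<And>r. r \<in> {0..1} \<Longrightarrow> \<bar>G r (y r) - y'' r\<bar> \<le> K"
    and t: "t \<in> {0..1}"
  shows "\<bar>T y t - y t\<bar> \<le> K"
proof -
  have yc: "continuous_on {0..1} y" by (rule cont_from_deriv) (auto intro: yd)
  have y'c: "continuous_on {0..1} y'" by (rule cont_from_deriv) (auto intro: y'd)
  have K0: "K \<ge> 0" using Kb[of 0] by auto
  have Gc: "continuous_on {0..1} (\<lambda>r. G r (y r) - y'' r)"
    by (intro continuous_on_diff G_cont yc y''c)
  have Vd: "V y s - y' s = integral {0..s} (\<lambda>r. G r (y r) - y'' r)" if s: "s \<in> {0..1}" for s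
  proof -
    have sub: "{0..s} \<subseteq> {0..1}" using s by auto
    have "(y'' has_integral (y' s - y' 0)) {0..s}"
      using s by (intro fundamental_theorem_of_calculus)
        (auto simp: has_real_derivative_iff_has_vector_derivative[symmetric]
          intro: DERIV_subset[OF y'd])
    then have i1: "integral {0..s} y'' = y' s - y1" using iy1 by (simp add: integral_unique)
    have "(\<lambda>r. G r (y r)) integrable_on {0..s}" "y'' integrable_on {0..s}"
      by (rule integrable_continuous_real[OF continuous_on_subset[OF G_cont[OF yc] sub]],
          rule integrable_continuous_real[OF continuous_on_subset[OF y''c sub]])
    then have "integral {0..s} (\<lambda>r. G r (y r) - y'' r) = integral {0..s} (\<lambda>r. G r (y r)) - integral {0..s} y''"
      by (rule integral_diff)
    then show ?thesis unfolding V_def using i1 by linarith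
  qed
  have Vb: "\<bar>V y s - y' s\<bar> \<le> K" if s: "s \<in> {0..1}" for s
  proof -
    have "norm (integral {0..s} (\<lambda>r. G r (y r) - y'' r)) \<le> K * (s - 0)"
      using s by (intro integral_bound continuous_on_subset[OF Gc]) (auto intro: Kb)
    also have "\<dots> \<le> K" using s K0 by (simp add: mult_left_le)
    finally show ?thesis using Vd[OF s] by simp
  qed
  have sub: "{0..t} \<subseteq> {0..1}" using t by auto
  have "(y' has_integral (y t - y 0)) {0..t}"
    using t by (intro fundamental_theorem_of_calculus)
      (auto simp: has_real_derivative_iff_has_vector_derivative[symmetric]
        intro: DERIV_subset[OF yd])
  then have i1: "integral {0..t} y' = y t - y0" using iy0 by (simp add: integral_unique)
  have "V y integrable_on {0..t}" "y' integrable_on {0..t}"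
    by (rule integrable_continuous_real[OF continuous_on_subset[OF V_cont[OF yc] sub]],
        rule integrable_continuous_real[OF continuous_on_subset[OF y'c sub]])
  then have "integral {0..t} (\<lambda>s. V y s - y' s) = integral {0..t} (V y) - integral {0..t} y'"
    by (rule integral_diff)
  then have Td: "T y t - y t = integral {0..t} (\<lambda>s. V y s - y' s)"
    unfolding T_def using i1 by linarith
  have "norm (integral {0..t} (\<lambda>s. V y s - y' s)) \<le> K * (t - 0)"
    using t by (intro integral_bound continuous_on_subset[OF continuous_on_diff[OF V_cont[OF yc] y'c]])
      (auto intro: Vb)
  also have "\<dots> \<le> K" using t K0 by (simp add: mult_left_le)
  finally show ?thesis using Td by simp
qed

end



context odeloc
begin

lemma exists_sol:
  assumes yd: "\<And>t. t \<in> {0..1} \<Longrightarrow> (y has_real_derivative y' t) (at t within {0..1})"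
    and y'd: "\<And>t. t \<in> {0..1} \<Longrightarrow> (y' has_real_derivative y'' t) (at t within {0..1})"
    and y''c: "continuous_on {0..1} y''"
    and iy0: "y 0 = y0" and iy1: "y' 0 = y1"
    and Kb: "\<And>r. r \<in> {0..1} \<Longrightarrow> \<bar>G r (y r) - y'' r\<bar> \<le> K"
  shows "\<exists>z. continuous_on {0..1} z \<and> (\<forall>t\<in>{0..1}. (z has_real_derivative V z t) (at t within {0..1})
     \<and> (V z has_real_derivative G t (z t)) (at t within {0..1}) \<and> \<bar>z t - y t\<bar> \<le> 2 * K * exp lam)"
proof -
  obtain w where fixw: "Tw w = w"
    using banach_fix_type[of "1/2" Tw] Tw_contr by auto
  define z where "z = (\<lambda>s. exp (lam * clamp s) * apply_bcontfun w s)"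
  have zc: "continuous_on {0..1} z" unfolding z_def by (rule zw_cont)
  have zT: "T z t = z t" if t: "t \<in> {0..1}" for t
  proof -
    have "apply_bcontfun w t = apply_bcontfun (Tw w) t" using fixw by simp
    also have "\<dots> = exp (- lam * t) * T z t"
      unfolding Tw_apply Tf_def z_def using clamp_id[OF t] by simp
    finally have "exp (lam * t) * apply_bcontfun w t = exp (lam * t) * exp (- lam * t) * T z t"
      by simp
    also have "\<dots> = T z t" by (simp add: exp_minus field_simps)
    finally show ?thesis unfolding z_def using clamp_id[OF t] by simp
  qed
  have zd: "(z has_real_derivative V z t) (at t within {0..1})" if t: "t \<in> {0..1}" for t
    by (rule has_field_derivative_transform_within[OF T_deriv[OF zc t], where d=1])
       (use t zT in auto)
  have yc: "continuous_on {0..1} y" by (rule cont_from_deriv) (auto intro: yd)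
  have K0: "K \<ge> 0" using Kb[of 0] by auto
  define w0 where "w0 = Bcontfun (\<lambda>t. (\<lambda>s. exp (- lam * s) * y s) (clamp t))"
  have w0b: "(\<lambda>t. (\<lambda>s. exp (- lam * s) * y s) (clamp t)) \<in> bcontfun"
    by (rule clamp_bcont) (intro continuous_on_mult continuous_on_exp continuous_on_const
        continuous_on_id yc)
  have w0a: "apply_bcontfun w0 t = exp (- lam * clamp t) * y (clamp t)" for t
    unfolding w0_def using Bcontfun_inverse[OF w0b] by simp
  have d0: "dist (Tw w0) w0 \<le> K"
  proof (rule dist_bound)
    fix t
    let ?z0 = "\<lambda>s. exp (lam * clamp s) * apply_bcontfun w0 s"
    have "T ?z0 (clamp t) = T y (clamp t)"
      by (rule T_cong[OF _ clamp_in]) (simp add: w0a clamp_id exp_minus field_simps)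
    then have eq: "apply_bcontfun (Tw w0) t - apply_bcontfun w0 t
        = exp (- lam * clamp t) * (T y (clamp t) - y (clamp t))"
      unfolding Tw_apply Tf_def w0a by (simp add: right_diff_distrib)
    have A: "\<bar>T y (clamp t) - y (clamp t)\<bar> \<le> K"
      by (rule T_close[OF yd y'd y''c iy0 iy1 Kb clamp_in])
    have E: "exp (- lam * clamp t) \<le> 1" using lam_pos clamp_in[of t] by auto
    have "\<bar>apply_bcontfun (Tw w0) t - apply_bcontfun w0 t\<bar>
       = exp (- lam * clamp t) * \<bar>T y (clamp t) - y (clamp t)\<bar>"
      unfolding eq abs_mult by simp
    also have "\<dots> \<le> 1 * K" by (rule mult_mono[OF E A]) auto
    finally have "\<bar>apply_bcontfun (Tw w0) t - apply_bcontfun w0 t\<bar> \<le> 1 * K" .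
    then show "dist (apply_bcontfun (Tw w0) t) (apply_bcontfun w0 t) \<le> K"
      by (simp add: dist_real_def)
  qed
  have "dist w w0 \<le> dist (Tw w) (Tw w0) + dist (Tw w0) w0"
    using dist_triangle[of "Tw w" w0 "Tw w0"] fixw by simp
  also have "\<dots> \<le> 1/2 * dist w w0 + K" using Tw_contr[of w w0] d0 by linarith
  finally have dw: "dist w w0 \<le> 2 * K" by linarith
  have close: "\<bar>z t - y t\<bar> \<le> 2 * K * exp lam" if t: "t \<in> {0..1}" for t
  proof -
    have "y t = exp (lam * t) * apply_bcontfun w0 t"
      using w0a[of t] clamp_id[OF t] by (simp add: exp_minus field_simps)
    then have "z t - y t = exp (lam * t) * (apply_bcontfun w t - apply_bcontfun w0 t)"
      unfolding z_def using clamp_id[OF t] by (simp add: right_diff_distrib)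
    then have "\<bar>z t - y t\<bar> = exp (lam * t) * dist (apply_bcontfun w t) (apply_bcontfun w0 t)"
      by (simp add: abs_mult dist_real_def)
    also have "\<dots> \<le> exp lam * (2 * K)"
    proof (rule mult_mono)
      show "exp (lam * t) \<le> exp lam" using t lam_pos by (auto simp: mult_left_le)
      show "dist (apply_bcontfun w t) (apply_bcontfun w0 t) \<le> 2 * K"
        using dist_bounded[of w t w0] dw by linarith
    qed auto
    finally show ?thesis by (simp add: mult.commute)
  qed
  show ?thesis using zc zd V_deriv[OF zc] close by blast
qed

end



lemma num_bound:
  fixes e k :: real
  assumes e: "e > 0" and k: "k \<ge> 8 * e^2 + 31"
  shows "exp (7 * e) * 512 * e^2 \<le> exp k"
proof -
  have "(2::real)^9 \<le> exp 1 ^ 9"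
    by (rule power_mono) (use exp_ge_add_one_self[of 1] in auto)
  also have "\<dots> = exp 9" using exp_of_nat_mult[of 9 "1::real"] by simp
  finally have a: "512 \<le> exp (9::real)" by simp
  have b: "e^2 \<le> exp (e^2)" using exp_ge_add_one_self[of "e^2"] by linarith
  have "exp (7 * e) * 512 * e^2 \<le> exp (7 * e) * exp 9 * exp (e^2)"
    by (intro mult_mono a b) auto
  also have "\<dots> = exp (7 * e + 9 + e^2)" by (simp add: exp_add)
  also have "\<dots> \<le> exp k"
  proof -
    have "7 * e \<le> 7 * e^2 + 2"
    proof -
      have "0 \<le> 7 * (e - 1/2)^2" by simp
      then show ?thesis by (simp add: power2_eq_square algebra_simps)
    qed
    then show ?thesis using k by simp
  qed
  finally show ?thesis .
qed

lemma k_lower: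
  fixes \<eta>1 \<eta>2 k :: real
  assumes "0 < \<eta>1" "\<eta>1 \<le> \<eta>2"
    and "k = 20 * (\<eta>2 / \<eta>1)^2 + 8 * \<eta>2^2 + 10 * (\<eta>2 / \<eta>1) + 1"
  shows "k \<ge> 8 * \<eta>2^2 + 31"
proof -
  have x: "\<eta>2 / \<eta>1 \<ge> 1" using assms by simp
  then have "(\<eta>2 / \<eta>1)^2 \<ge> 1" by simp
  then show ?thesis using assms(3) x by linarith
qed

lemma qb_eq:
  fixes z v pbt :: real
  assumes "z \<noteq> 0"
  shows "1 / (1 / z^4) * (5/4 * ((-4 * v / z^5) / (1 / z^4))^2
      - (20 * v^2 / z^6 - 4 * (pbt / (4 * z^3)) / z^5) / (1 / z^4)) = pbt"
  using assms by (simp add: field_simps power2_eq_square)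




theorem lemma9p1:
  fixes q pb :: "real \<Rightarrow> real" and \<eta>1 \<eta>2 \<epsilon> k :: real
  assumes q_smooth: "smooth_on UNIV q"
    and q_pos: "\<And>t. q t > 0"
    and eta1: "\<eta>1 > 0" and eta2: "\<eta>2 > 0"
    and q_bounds: "\<And>t. 0 \<le> t \<Longrightarrow> t \<le> 1 \<Longrightarrow> \<eta>1 \<le> q t \<and> q t \<le> \<eta>2"
    and p_bound: "\<And>t. 0 \<le> t \<Longrightarrow> t \<le> 1 \<Longrightarrow>
       \<bar>1 / q t * (5/4 * (deriv q t / q t)^2 - deriv (deriv q) t / q t)\<bar> \<le> \<eta>2"
    and dq_bound: "\<And>t. 0 \<le> t \<Longrightarrow> t \<le> 1 \<Longrightarrow> \<bar>deriv q t\<bar> \<le> \<eta>2"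
    and k_def: "k = 20 * (\<eta>2 / \<eta>1)^2 + 8 * \<eta>2^2 + 10 * (\<eta>2 / \<eta>1) + 1"
    and eps: "0 < \<epsilon>" "\<epsilon> < \<eta>1 / 2"
    and pb_smooth: "smooth_on {0..1} pb"
    and pb_close: "\<And>t. 0 \<le> t \<Longrightarrow> t \<le> 1 \<Longrightarrow>
       \<bar>1 / q t * (5/4 * (deriv q t / q t)^2 - deriv (deriv q) t / q t) - pb t\<bar> \<le> \<epsilon> * exp (- k)"
  shows "\<exists>qb D. deriv_seq {0..1} qb D \<and>
     (\<forall>t\<in>{0..1}. 1 / qb t * (5/4 * (D 1 t / qb t)^2 - D 2 t / qb t) = pb t) \<and>
     (\<forall>t\<in>{0..1}. \<bar>q t - qb t\<bar> \<le> \<epsilon>)"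
proof -
  obtain Dq where Dq: "deriv_seq UNIV q Dq" using q_smooth unfolding smooth_on_def by blast
  have Dq0: "Dq 0 = q" using Dq unfolding deriv_seq_def by simp
  have Dqd: "\<And>n x. (Dq n has_real_derivative Dq (Suc n) x) (at x)"
    using Dq unfolding deriv_seq_def by simp
  define Q1 where "Q1 = Dq 1"
  define Q2 where "Q2 = Dq 2"
  have qd: "(q has_real_derivative Q1 x) (at x)" for x
    using Dqd[of 0 x] Dq0 by (simp add: Q1_def)
  have q1d: "(Q1 has_real_derivative Q2 x) (at x)" for x
    using Dqd[of 1 x] by (simp add: Q1_def Q2_def numeral_2_eq_2)
  have dq: "deriv q = Q1" using qd by (intro ext DERIV_imp_deriv)
  have ddq: "deriv Q1 = Q2" using q1d by (intro ext DERIV_imp_deriv)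
  have qc: "continuous_on UNIV q" using qd by (meson DERIV_continuous_on)
  have q1c: "continuous_on UNIV Q1" using q1d by (meson DERIV_continuous_on)
  have q2c: "continuous_on UNIV Q2" using Dqd[of 2] unfolding Q2_def by (meson DERIV_continuous_on)
  obtain Dp where Dp: "deriv_seq {0..1} pb Dp" using pb_smooth unfolding smooth_on_def by blast
  have pbd: "\<And>x. x \<in> {0..1} \<Longrightarrow> (pb has_real_derivative Dp 1 x) (at x within {0..1})"
    using Dp unfolding deriv_seq_def by (metis One_nat_def)
  have pbc: "continuous_on {0..1} pb" by (rule cont_from_deriv) (auto intro: pbd)
  have e12: "\<eta>1 \<le> \<eta>2" using q_bounds[of 0] by auto
  have kl: "k \<ge> 8 * \<eta>2^2 + 31" using k_lower[OF eta1 e12 k_def] .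
  define p where "p t = 1 / q t * (5/4 * (Q1 t / q t)^2 - Q2 t / q t)" for t
  have pB: "\<bar>p t\<bar> \<le> \<eta>2" if "t \<in> {0..1}" for t
    using p_bound[of t, unfolded dq ddq] that unfolding p_def by auto
  have pC: "\<bar>p t - pb t\<bar> \<le> \<epsilon> * exp (- k)" if "t \<in> {0..1}" for t
    using pb_close[of t, unfolded dq ddq] that unfolding p_def by auto
  define a where "a = exp (- ln \<eta>2 / 4)"
  define c where "c = a / 2"
  have a0: "a > 0" unfolding a_def by simp
  have c0: "c > 0" unfolding c_def using a0 by simp
  have a4: "a^4 = 1 / \<eta>2"
  proof -
    have "a^4 = exp (of_nat 4 * (- ln \<eta>2 / 4))" unfolding a_def by (rule exp_of_nat_mult[symmetric])
    also have "\<dots> = exp (- ln \<eta>2)" by simp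
    also have "\<dots> = 1 / \<eta>2" using eta2 by (simp add: exp_minus inverse_eq_divide)
    finally show ?thesis .
  qed
  have c4: "1 / c^4 = 16 * \<eta>2"
    unfolding c_def using a4 eta2 by (simp add: power_divide)
  define y where "y t = exp (- ln (q t) / 4)" for t
  define y' where "y' t = y t * (- Q1 t / (4 * q t))" for t
  define y'' where "y'' t = p t / (4 * (y t)^3)" for t
  have ypos: "y t > 0" for t unfolding y_def by simp
  have y4: "(y t)^4 = 1 / q t" for t
  proof -
    have "(y t)^4 = exp (of_nat 4 * (- ln (q t) / 4))" unfolding y_def by (rule exp_of_nat_mult[symmetric])
    also have "\<dots> = exp (- ln (q t))" by simp
    also have "\<dots> = 1 / q t" using q_pos[of t] by (simp add: exp_minus inverse_eq_divide)
    finally show ?thesis .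
  qed
  have yd: "(y has_real_derivative y' t) (at t)" for t
    unfolding y_def[abs_def] y'_def y_def
    using q_pos[of t] qd[of t]
    by (auto intro!: derivative_eq_intros simp: field_simps)
  have y'd: "(y' has_real_derivative y'' t) (at t)" for t
  proof -
    have "(y' has_real_derivative (y' t * (- Q1 t / (4 * q t)) + y t * (- (Q2 t * (4 * q t) - Q1 t * (4 * Q1 t)) / (4 * q t)^2))) (at t)"
      unfolding y'_def[abs_def]
      using q_pos[of t] qd[of t] q1d[of t] yd[of t]
      by (auto intro!: derivative_eq_intros simp: field_simps power2_eq_square y'_def)
    moreover have "y' t * (- Q1 t / (4 * q t)) + y t * (- (Q2 t * (4 * q t) - Q1 t * (4 * Q1 t)) / (4 * q t)^2)
        = y t * (5 * (Q1 t)^2 / (16 * (q t)^2) - Q2 t / (4 * q t))"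
      unfolding y'_def using q_pos[of t] by (simp add: field_simps power2_eq_square)
    moreover have "y'' t = y t * (5 * (Q1 t)^2 / (16 * (q t)^2) - Q2 t / (4 * q t))"
    proof -
      have h: "(y t)^3 = 1 / (q t * y t)"
        using y4[of t] ypos[of t] q_pos[of t] by (simp add: field_simps eval_nat_numeral)
      have "y'' t = p t * (q t * y t) / 4" unfolding y''_def h using q_pos[of t] ypos[of t]
        by (simp add: field_simps)
      also have "\<dots> = (p t * q t) * y t / 4" by (simp add: mult.assoc)
      also have "p t * q t = 5/4 * (Q1 t / q t)^2 - Q2 t / q t"
        unfolding p_def using q_pos[of t] by simp
      finally show ?thesis using q_pos[of t] by (simp add: field_simps power2_eq_square)
    qed
    ultimately show ?thesis by simp
  qed
  have y''c: "continuous_on {0..1} y''"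
  proof -
    have yc: "continuous_on UNIV y" using yd by (meson DERIV_continuous_on)
    have "\<forall>t\<in>{0..1}. q t \<noteq> 0" "\<forall>t\<in>{0..1}. 4 * (y t)^3 \<noteq> 0" using q_pos ypos by (auto simp: less_imp_neq[symmetric])
    then show ?thesis unfolding y''_def[abs_def] p_def
      by (intro continuous_intros continuous_on_subset[OF qc] continuous_on_subset[OF q1c]
          continuous_on_subset[OF q2c] continuous_on_subset[OF yc]) auto
  qed
  have yge: "y t \<ge> 2 * c" if "t \<in> {0..1}" for t
  proof -
    have "ln (q t) \<le> ln \<eta>2" using q_bounds[of t] that q_pos[of t] by auto
    then show ?thesis unfolding y_def c_def a_def by simp
  qed
  have Pb: "\<bar>pb r\<bar> \<le> 2 * \<eta>2" if "r \<in> {0..1}" for r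
  proof -
    have "0 \<le> 8 * \<eta>2^2" by simp
    then have "0 \<le> k" using kl by linarith
    then have "exp (- k) \<le> 1" by simp
    then have "\<epsilon> * exp (- k) \<le> \<epsilon> * 1" using eps by (intro mult_left_mono) auto
    then show ?thesis using pB[OF that] pC[OF that] eps e12 by linarith
  qed
  have lamL: "2 * (3 * (2 * \<eta>2) / (4 * c^4)) \<le> (7 * \<eta>2)^2"
  proof -
    have "2 * (3 * (2 * \<eta>2) / (4 * c^4)) = 3 * \<eta>2 * (1 / c^4)" by simp
    also have "\<dots> = 48 * \<eta>2^2" unfolding c4 by (simp add: power2_eq_square)
    finally show ?thesis by (simp add: power2_eq_square)
  qed
  interpret O: odeloc pb c "2 * \<eta>2" "7 * \<eta>2" "y 0" "y' 0"
    by unfold_locales (use pbc Pb c0 eta2 lamL in auto)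
  define K where "K = \<epsilon> * exp (- k) / (4 * c^3)"
  have Kb: "\<bar>O.G r (y r) - y'' r\<bar> \<le> K" if r: "r \<in> {0..1}" for r
  proof -
    have m: "max (y r) c = y r" using yge[OF r] c0 by simp
    have "O.G r (y r) - y'' r = (pb r - p r) / (4 * (y r)^3)"
      unfolding O.G_def y''_def m by (simp add: diff_divide_distrib)
    then have "\<bar>O.G r (y r) - y'' r\<bar> = \<bar>p r - pb r\<bar> / (4 * (y r)^3)"
      using ypos[of r] by (simp add: abs_minus_commute)
    also have "\<dots> \<le> \<epsilon> * exp (- k) / (4 * (y r)^3)"
      using pC[OF r] ypos[of r] by (simp add: divide_right_mono)
    also have "\<dots> \<le> \<epsilon> * exp (- k) / (4 * c^3)"
    proof -
      have "c^3 \<le> (y r)^3" using yge[OF r] c0 by (intro power_mono) auto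
      then show ?thesis using c0 eps ypos[of r] by (intro divide_left_mono mult_left_mono) auto
    qed
    finally show ?thesis unfolding K_def .
  qed
  obtain z where zc: "continuous_on {0..1} z"
    and zprops: "\<forall>t\<in>{0..1}. (z has_real_derivative O.V z t) (at t within {0..1})
     \<and> (O.V z has_real_derivative O.G t (z t)) (at t within {0..1}) \<and> \<bar>z t - y t\<bar> \<le> 2 * K * exp (7 * \<eta>2)"
    using O.exists_sol[of y y' y'' K, OF has_field_derivative_at_within[OF yd]
        has_field_derivative_at_within[OF y'd] y''c refl refl Kb] by blast
  define E where "E = exp (7 * \<eta>2 - k)"
  have E0: "E > 0" unfolding E_def by simp
  have NE: "512 * \<eta>2^2 * E \<le> 1"
  proof -
    have "exp (7 * \<eta>2) * 512 * \<eta>2^2 \<le> exp k" by (rule num_bound[OF eta2 kl])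
    then have "exp (7 * \<eta>2) * 512 * \<eta>2^2 * exp (- k) \<le> exp k * exp (- k)"
      by (intro mult_right_mono) auto
    then show ?thesis unfolding E_def by (simp add: exp_diff exp_minus field_simps)
  qed
  have KE: "2 * K * exp (7 * \<eta>2) = \<epsilon> * E / (2 * c^3)"
    unfolding K_def E_def by (simp add: exp_diff exp_minus field_simps)
  have epsh: "\<epsilon> \<le> \<eta>2 / 2" using eps e12 by simp
  have small: "\<epsilon> * E / (2 * c^3) \<le> c"
  proof -
    have "\<epsilon> * E \<le> \<eta>2 / 2 * E" using epsh E0 by (intro mult_right_mono) auto
    also have "\<dots> \<le> 2 * c^4"
    proof -
      have cc: "c^4 = 1 / (16 * \<eta>2)" using c4 c0 eta2 by (simp add: field_simps)
      have h1: "E * \<eta>2^2 \<le> 1 / 512" using NE by (simp add: mult.commute mult.left_commute)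
      have "\<eta>2 / 2 * E = (E * \<eta>2^2) / (2 * \<eta>2)" using eta2 by (simp add: field_simps power2_eq_square)
      also have "\<dots> \<le> (1 / 512) / (2 * \<eta>2)" using h1 eta2 by (intro divide_right_mono) auto
      also have "\<dots> \<le> 2 * c^4" unfolding cc using eta2 by (simp add: field_simps)
      finally show ?thesis .
    qed
    finally have "\<epsilon> * E \<le> 2 * c^4" .
    then show ?thesis using c0 by (simp add: field_simps eval_nat_numeral)
  qed
  have zge: "z t \<ge> c" if t: "t \<in> {0..1}" for t
    using zprops t yge[OF t] KE small by fastforce
  have zne: "z t \<noteq> 0" if "t \<in> {0..1}" for t using zge[OF that] c0 by auto
  define V1 where "V1 = O.V z"
  define qb where "qb t = 1 / (z t)^4" for t
  define qb1 where "qb1 t = -4 * V1 t / (z t)^5" for t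
  define qb2 where "qb2 t = 20 * (V1 t)^2 / (z t)^6 - 4 * (pb t / (4 * (z t)^3)) / (z t)^5" for t
  have zd: "(z has_real_derivative V1 t) (at t within {0..1})" if "t \<in> {0..1}" for t
    using zprops that unfolding V1_def by blast
  have V1d: "(V1 has_real_derivative pb t / (4 * (z t)^3)) (at t within {0..1})" if t: "t \<in> {0..1}" for t
  proof -
    have m: "max (z t) c = z t" using zge[OF t] by simp
    have "(O.V z has_real_derivative O.G t (z t)) (at t within {0..1})" using zprops t by blast
    then show ?thesis unfolding V1_def O.G_def m .
  qed
  have qbd: "(qb has_real_derivative qb1 t) (at t within {0..1})" if t: "t \<in> {0..1}" for t
    unfolding qb_def[abs_def] qb1_def using zd[OF t] zne[OF t]
    by (auto intro!: derivative_eq_intros simp: field_simps eval_nat_numeral)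
  have qb1d: "(qb1 has_real_derivative qb2 t) (at t within {0..1})" if t: "t \<in> {0..1}" for t
    unfolding qb1_def[abs_def] qb2_def using zd[OF t] zne[OF t] V1d[OF t]
    by (auto intro!: derivative_eq_intros simp: field_simps eval_nat_numeral)
  have Cpb: "Cn {0..1} n pb" for n using deriv_seq_Cn[OF Dp, of n 0] Dp unfolding deriv_seq_def by simp
  have Cz: "Cn {0..1} n z \<and> Cn {0..1} n V1" for n
  proof (induction n)
    case 0 then show ?case by simp
  next
    case (Suc n)
    then have zn: "Cn {0..1} n z" and vn: "Cn {0..1} n V1" by auto
    have iz: "Cn {0..1} n (\<lambda>t. inverse (z t))" using Cn_inverse[OF zn] zne by blast
    have g: "Cn {0..1} n (\<lambda>t. pb t * (inverse (z t) * (inverse (z t) * inverse (z t))) * (1/4))"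
      by (intro Cn_mult Cpb iz Cn_const)
    have gd: "\<forall>t\<in>{0..1}. (V1 has_real_derivative pb t * (inverse (z t) * (inverse (z t) * inverse (z t))) * (1/4)) (at t within {0..1})"
    proof
      fix t :: real assume t: "t \<in> {0..1}"
      have "pb t / (4 * (z t)^3) = pb t * (inverse (z t) * (inverse (z t) * inverse (z t))) * (1/4)"
        using zne[OF t] by (simp add: field_simps eval_nat_numeral)
      then show "(V1 has_real_derivative pb t * (inverse (z t) * (inverse (z t) * inverse (z t))) * (1/4)) (at t within {0..1})"
        by (rule DERIV_cong[OF V1d[OF t]])
    qed
    have "Cn {0..1} (Suc n) z" using zd vn by (auto intro!: exI[of _ V1])
    moreover have "Cn {0..1} (Suc n) V1" using gd g by (auto intro!: exI[of _ "\<lambda>t. pb t * (inverse (z t) * (inverse (z t) * inverse (z t))) * (1/4)"])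
    ultimately show ?case by blast
  qed
  have Cqb: "Cn {0..1} n qb" for n
  proof -
    have iz: "Cn {0..1} n (\<lambda>t. inverse (z t))" using Cn_inverse Cz zne by blast
    have "Cn {0..1} n (\<lambda>t. inverse (z t) * (inverse (z t) * (inverse (z t) * inverse (z t))))"
      by (intro Cn_mult iz)
    then show ?thesis
      by (rule Cn_cong) (auto simp: qb_def field_simps eval_nat_numeral)
  qed
  obtain D where D: "deriv_seq {0..1} qb D" using Cn_build[of qb] Cqb by blast
  have D0: "D 0 = qb" using D unfolding deriv_seq_def by simp
  have D1: "D 1 t = qb1 t" if t: "t \<in> {0..1}" for t
  proof -
    have "(qb has_real_derivative D 1 t) (at t within {0..1})"
      using D t unfolding deriv_seq_def by (metis One_nat_def)
    then show ?thesis using deriv_unique01[OF t _ qbd[OF t]] by blast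
  qed
  have D2: "D 2 t = qb2 t" if t: "t \<in> {0..1}" for t
  proof -
    have "(D 1 has_real_derivative D 2 t) (at t within {0..1})"
      using D t unfolding deriv_seq_def by (metis Suc_1)
    then have "(qb1 has_real_derivative D 2 t) (at t within {0..1})"
      by (rule has_field_derivative_transform_within[where d=1]) (use t D1 in auto)
    then show ?thesis using deriv_unique01[OF t _ qb1d[OF t]] by blast
  qed
  have eq: "1 / qb t * (5/4 * (D 1 t / qb t)^2 - D 2 t / qb t) = pb t" if t: "t \<in> {0..1}" for t
    unfolding D1[OF t] D2[OF t] qb_def qb1_def qb2_def using qb_eq[OF zne[OF t]] by simp
  have close: "\<bar>q t - qb t\<bar> \<le> \<epsilon>" if t: "t \<in> {0..1}" for t
  proof -
    have yc: "y t \<ge> c" using yge[OF t] c0 by simp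
    have "q t = 1 / (y t)^4" using y4[of t] q_pos[of t] by simp
    then have "\<bar>q t - qb t\<bar> = \<bar>1 / (y t)^4 - 1 / (z t)^4\<bar>" unfolding qb_def by simp
    also have "\<dots> \<le> 4 / c^5 * \<bar>y t - z t\<bar>" by (rule inv_quart_lip[OF c0 yc zge[OF t]])
    also have "\<dots> \<le> 4 / c^5 * (\<epsilon> * E / (2 * c^3))"
      using zprops t KE c0 by (intro mult_left_mono) (auto simp: abs_minus_commute)
    also have "\<dots> = 2 * \<epsilon> * E * (1 / c^4)^2" using c0 by (simp add: field_simps power2_eq_square eval_nat_numeral)
    also have "\<dots> = \<epsilon> * (512 * \<eta>2^2 * E)" unfolding c4 by (simp add: power2_eq_square)
    also have "\<dots> \<le> \<epsilon> * 1" using NE eps by (intro mult_left_mono) auto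
    finally show ?thesis by simp
  qed
  show ?thesis using D eq close by blast
qed


end
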